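(* Let $G$ be a finitely generated group, $K$ a subgroup of $G$, $\Sigma$ a finite alphabet and $\psi:\Sigma\to G$ a map such that $\psi(\Sigma)$ generates $G$ as a semigroup. Then the word problem $L(G,K,\psi)=\{w\in\Sigma^*:\psi(w)\in K\}$ is growth sensitive, i.e. for every finite non-empty set $F\subset\Sigma^+$ consisting of factors of elements of $L(G,K,\psi)$ one has $\mathsf h(L(G,K,\psi)^F)<\mathsf h(L(G,K,\psi))$.
   Context: $\psi$ is extended to a monoid homomorphism $\Sigma^*\to G$ by $\psi(a_1\cdots a_n)=\psi(a_1)\cdots\psi(a_n)$ and $\psi(\epsilon)=1_G$. $\Sigma^+=\Sigma^*\setminus\{\epsilon\}$; a factor of $a_1\cdots a_n$ is a word $a_i\cdots a_j$ with $1\le i\le j\le n$. For $L\subset\Sigma^*$, $\mathsf h(L)=\limsup_{n\to\infty}\frac1n\log|\{w\in L:|w|=n\}|$ and $L^F=\{w\in L:\text{no }v\in F\text{ is a factor of }w\}$. *)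

theory Defs
  imports "HOL-Algebra.Algebra" "HOL-Library.Sublist" "HOL-Library.Extended_Real"
          "HOL-Library.Liminf_Limsup"
begin

definition psi_word :: "('g, 'b) monoid_scheme \<Rightarrow> ('a \<Rightarrow> 'g) \<Rightarrow> 'a list \<Rightarrow> 'g" where
  "psi_word G psi w = foldr (\<lambda>a g. psi a \<otimes>\<^bsub>G\<^esub> g) w \<one>\<^bsub>G\<^esub>"

definition word_problem :: "('g, 'b) monoid_scheme \<Rightarrow> 'g set \<Rightarrow> 'a set \<Rightarrow> ('a \<Rightarrow> 'g) \<Rightarrow> 'a list set" where
  "word_problem G K Alph psi = {w \<in> lists Alph. psi_word G psi w \<in> K}"

definition avoid :: "'a list set \<Rightarrow> 'a list set \<Rightarrow> 'a list set" where
  "avoid L F = {w \<in> L. \<forall>v\<in>F. \<not> sublist v w}"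

definition growth :: "'a list set \<Rightarrow> ereal" where
  "growth L = limsup (\<lambda>n. let c = card {w \<in> L. length w = n} in
       if c = 0 then - \<infinity> else ereal (ln (real c) / real n))"

definition generates_as_semigroup :: "('g, 'b) monoid_scheme \<Rightarrow> 'a set \<Rightarrow> ('a \<Rightarrow> 'g) \<Rightarrow> bool" where
  "generates_as_semigroup G Alph psi \<longleftrightarrow>
     (\<forall>g\<in>carrier G. \<exists>w\<in>lists Alph. w \<noteq> [] \<and> psi_word G psi w = g)"

definition finitely_generated_group :: "('g, 'b) monoid_scheme \<Rightarrow> bool" where
  "finitely_generated_group G \<longleftrightarrow>
     (\<exists>S. finite S \<and> S \<subseteq> carrier G \<and> generate G S = carrier G)"

end

theory Submission imports Defs begin


fun ins :: "nat \<Rightarrow> nat \<Rightarrow> 'a list \<Rightarrow> nat list \<Rightarrow> 'a list \<Rightarrow> 'a list" where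
  "ins s T p [] w = w"
| "ins s T p (c#cs) w = take (c*s) w @ p @ drop (c*s) (take T w) @ ins s T p cs (drop T w)"

lemma ins_length:
  "\<forall>c\<in>set cs. c*s \<le> T \<Longrightarrow> length cs * T \<le> length w \<Longrightarrow>
   length (ins s T p cs w) = length w + length cs * length p"
proof (induction cs arbitrary: w)
  case Nil then show ?case by simp
next
  case (Cons c cs)
  have "length (ins s T p cs (drop T w)) = length (drop T w) + length cs * length p"
    using Cons by (intro Cons.IH) auto
  then show ?case using Cons.prems by auto
qed

lemma ins_set: "set (ins s T p cs w) \<subseteq> set w \<union> set p"
proof (induction cs arbitrary: w)
  case Nil then show ?case by simp
next
  case (Cons c cs)
  have "set (ins s T p cs (drop T w)) \<subseteq> set w \<union> set p"
    using Cons.IH[of "drop T w"] set_drop_subset[of T w] by blast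
  moreover have "set (take (c*s) w) \<subseteq> set w" by (rule set_take_subset)
  moreover have "set (drop (c * s) (take T w)) \<subseteq> set w"
    by (meson in_set_dropD in_set_takeD subsetI)
  ultimately show ?case by auto
qed

lemma sublist_mid:
  assumes "length x = a" "a + s \<le> b" "b \<le> length u" "length v = s"
    and "x @ v @ y = take b u @ y'"
  shows "sublist v u"
proof -
  have "take s (drop a (x @ v @ y)) = v" using assms(1-4) by simp
  moreover have "drop a (take b u @ y') = drop a (take b u) @ y'" using assms(1-4) by simp
  moreover have "take s (drop a (take b u) @ y') = take s (drop a (take b u))"
    using assms(1-4) by simp
  moreover have "take s (drop a (x @ v @ y)) = take s (drop a (take b u @ y'))"
    by (rule arg_cong[where f="\<lambda>l. take s (drop a l)"]) (rule assms(5))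
  ultimately have "v = take s (drop a (take b u))" by simp
  moreover have "sublist (take s (drop a (take b u))) u"
    by (meson sublist_drop sublist_order.order.trans sublist_take)
  ultimately show ?thesis by simp
qed

lemma block_inj:
  assumes T: "T = t*s" and a: "a < t" and a': "a' < t" and lv: "length v = s"
    and lu: "length u = T" and lu': "length u' = T"
    and nu: "\<not> sublist v u" and nu': "\<not> sublist v u'"
    and eq: "take (a*s) u @ (v@z) @ drop (a*s) u = take (a'*s) u' @ (v@z) @ drop (a'*s) u'"
  shows "a = a' \<and> u = u'"
proof -
  have le: "\<And>c. c < t \<Longrightarrow> c*s \<le> T" using T by simp
  have "\<not> a < a'"
  proof
    assume "a < a'"
    then have "a*s + s \<le> a'*s" by (metis add_mult_distrib less_eq_Suc_le mult_le_mono1 plus_1_eq_Suc add.commute mult_1)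
    moreover have "take (a'*s) u' = take (a'*s) (take (a'*s) u')" by simp
    ultimately have "sublist v u'"
      using eq lu lu' le[OF a] le[OF a'] lv
      by (intro sublist_mid[of "take (a*s) u" "a*s" s "a'*s" u' v "z @ drop (a*s) u" "(v@z) @ drop (a'*s) u'"]) auto
    with nu' show False by simp
  qed
  moreover have "\<not> a' < a"
  proof
    assume "a' < a"
    then have "a'*s + s \<le> a*s" by (metis add_mult_distrib less_eq_Suc_le mult_le_mono1 plus_1_eq_Suc add.commute mult_1)
    then have "sublist v u"
      using eq lu lu' le[OF a] le[OF a'] lv
      by (intro sublist_mid[of "take (a'*s) u'" "a'*s" s "a*s" u v "z @ drop (a'*s) u'" "(v@z) @ drop (a*s) u"]) auto
    with nu show False by simp
  qed
  ultimately have aa: "a = a'" by simp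
  have "take (a*s) u = take (a*s) u' \<and> drop (a*s) u = drop (a*s) u'"
    using eq aa lu lu' le[OF a] by (simp add: append_eq_append_conv)
  then have "u = u'" by (metis append_take_drop_id)
  with aa show ?thesis by simp
qed

lemma ins_inj:
  assumes T: "T = t*s" and lv: "length v = s"
  shows "length cs = length cs' \<Longrightarrow> \<forall>c\<in>set cs. c < t \<Longrightarrow> \<forall>c\<in>set cs'. c < t \<Longrightarrow>
    length w = length w' \<Longrightarrow> length cs * T \<le> length w \<Longrightarrow>
    \<not> sublist v w \<Longrightarrow> \<not> sublist v w' \<Longrightarrow>
    ins s T (v@z) cs w = ins s T (v@z) cs' w' \<Longrightarrow> cs = cs' \<and> w = w'"
proof (induction cs arbitrary: cs' w w')
  case Nil then show ?case by simp
next
  case (Cons c cs)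
  obtain c' cs'' where cs': "cs' = c' # cs''" using Cons.prems(1) by (cases cs') auto
  have le: "\<And>c. c < t \<Longrightarrow> c*s \<le> T" using T by simp
  have c: "c < t" and c': "c' < t" using Cons.prems cs' by auto
  have "T \<le> length (c#cs) * T" by simp
  then have TL: "T \<le> length w" "T \<le> length w'" using Cons.prems(4,5) by linarith+
  have ltw: "length (take T w) = T" "length (take T w') = T" using TL by auto
  let ?B = "take (c*s) w @ (v@z) @ drop (c*s) (take T w)"
  let ?B' = "take (c'*s) w' @ (v@z) @ drop (c'*s) (take T w')"
  have lB: "length ?B = length ?B'" using le[OF c] le[OF c'] ltw by simp
  have "?B @ ins s T (v@z) cs (drop T w) = ?B' @ ins s T (v@z) cs'' (drop T w')"
    using Cons.prems(8) cs' by simp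
  moreover have sp: "\<And>xa ya xb yb. length xa = length xb \<Longrightarrow> xa @ ya = xb @ yb \<Longrightarrow> xa = xb \<and> ya = yb"
    by simp
  ultimately have e1: "?B = ?B'" and e2: "ins s T (v@z) cs (drop T w) = ins s T (v@z) cs'' (drop T w')"
    using lB by blast+
  have tk: "take (c*s) w = take (c*s) (take T w)" "take (c'*s) w' = take (c'*s) (take T w')"
    using le[OF c] le[OF c'] by (auto simp: min_def)
  have nt: "\<not> sublist v (take T w)" "\<not> sublist v (take T w')"
    using Cons.prems(6,7) by (meson sublist_take sublist_order.order.trans)+
  have cc: "c = c' \<and> take T w = take T w'"
    using e1 tk by (intro block_inj[OF T c c' lv ltw nt]) simp
  have nd: "\<not> sublist v (drop T w)" "\<not> sublist v (drop T w')"
    using Cons.prems(6,7) by (meson sublist_drop sublist_order.order.trans)+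
  have "cs = cs'' \<and> drop T w = drop T w'"
    using Cons.prems cs' nd e2 by (intro Cons.IH) auto
  then show ?case using cc cs' by (metis append_take_drop_id)
qed


lemma psi_word_closed:
  assumes "monoid G" "psi ` Alph \<subseteq> carrier G" "set w \<subseteq> Alph"
  shows "psi_word G psi w \<in> carrier G"
  using assms(3)
proof (induction w)
  case Nil then show ?case using assms by (simp add: psi_word_def monoid.one_closed)
next
  case (Cons a w)
  then have "psi_word G psi w \<in> carrier G" by simp
  moreover have "psi a \<in> carrier G" using Cons assms by auto
  ultimately show ?case using assms(1) by (simp add: psi_word_def monoid.m_closed)
qed

lemma psi_word_append:
  assumes "monoid G" "psi ` Alph \<subseteq> carrier G" "set x \<subseteq> Alph" "set y \<subseteq> Alph"
  shows "psi_word G psi (x @ y) = psi_word G psi x \<otimes>\<^bsub>G\<^esub> psi_word G psi y"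
  using assms(3)
proof (induction x)
  case Nil then show ?case using assms psi_word_closed[OF assms(1,2,4)]
    by (simp add: psi_word_def monoid.l_one)
next
  case (Cons a x)
  have pa: "psi a \<in> carrier G" using Cons assms by auto
  have px: "psi_word G psi x \<in> carrier G" using Cons assms psi_word_closed by auto
  have py: "psi_word G psi y \<in> carrier G" using assms psi_word_closed by auto
  have "psi_word G psi ((a # x) @ y) = psi a \<otimes>\<^bsub>G\<^esub> psi_word G psi (x @ y)"
    by (simp add: psi_word_def)
  also have "\<dots> = psi a \<otimes>\<^bsub>G\<^esub> (psi_word G psi x \<otimes>\<^bsub>G\<^esub> psi_word G psi y)"
    using Cons by simp
  also have "\<dots> = (psi a \<otimes>\<^bsub>G\<^esub> psi_word G psi x) \<otimes>\<^bsub>G\<^esub> psi_word G psi y"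
    using pa px py assms(1) by (simp add: monoid.m_assoc)
  also have "psi a \<otimes>\<^bsub>G\<^esub> psi_word G psi x = psi_word G psi (a # x)"
    by (simp add: psi_word_def)
  finally show ?case .
qed

lemma psi_word_mid:
  assumes "monoid G" "psi ` Alph \<subseteq> carrier G" "set x \<subseteq> Alph" "set y \<subseteq> Alph" "set p \<subseteq> Alph"
    and "psi_word G psi p = \<one>\<^bsub>G\<^esub>"
  shows "psi_word G psi (x @ p @ y) = psi_word G psi (x @ y)"
proof -
  have py: "psi_word G psi y \<in> carrier G" using assms psi_word_closed by auto
  have "psi_word G psi (p @ y) = psi_word G psi y"
    using psi_word_append[OF assms(1,2,5,4)] assms(6) py assms(1) by (simp add: monoid.l_one)
  then show ?thesis using psi_word_append[OF assms(1,2,3)] assms by simp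
qed

lemma ins_psi:
  assumes "monoid G" "psi ` Alph \<subseteq> carrier G" "set p \<subseteq> Alph"
    and "psi_word G psi p = \<one>\<^bsub>G\<^esub>"
  shows "set w \<subseteq> Alph \<Longrightarrow> \<forall>c\<in>set cs. c*s \<le> T \<Longrightarrow> psi_word G psi (ins s T p cs w) = psi_word G psi w"
proof (induction cs arbitrary: w)
  case Nil then show ?case by simp
next
  case (Cons c cs)
  have sw: "set (take (c*s) w) \<subseteq> Alph" "set (drop T w) \<subseteq> Alph"
      "set (drop (c * s) (take T w)) \<subseteq> Alph"
    using Cons.prems(1) by (auto dest: in_set_takeD in_set_dropD)
  have si: "set (ins s T p cs (drop T w)) \<subseteq> Alph" using ins_set[of s T p cs "drop T w"] sw assms(3) by auto
  have "psi_word G psi (ins s T p (c#cs) w) =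
      psi_word G psi (take (c*s) w @ p @ (drop (c * s) (take T w) @ ins s T p cs (drop T w)))"
    by simp
  also have "\<dots> = psi_word G psi (take (c*s) w @ drop (c * s) (take T w) @ ins s T p cs (drop T w))"
    using sw si by (intro psi_word_mid[OF assms(1,2) _ _ assms(3,4)]) auto
  also have "\<dots> = psi_word G psi ((take (c*s) w @ drop (c * s) (take T w)) @ ins s T p cs (drop T w))"
    by simp
  also have "\<dots> = psi_word G psi (take (c*s) w @ drop (c * s) (take T w)) \<otimes>\<^bsub>G\<^esub> psi_word G psi (ins s T p cs (drop T w))"
    using sw si by (intro psi_word_append[OF assms(1,2)]) auto
  also have "psi_word G psi (ins s T p cs (drop T w)) = psi_word G psi (drop T w)"
    using Cons sw by auto
  also have "take (c*s) w @ drop (c * s) (take T w) = take T w"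
  proof -
    have "take (c*s) w = take (c*s) (take T w)" using Cons.prems(2) by (auto simp: min_def)
    then show ?thesis by (metis append_take_drop_id)
  qed
  also have "psi_word G psi (take T w) \<otimes>\<^bsub>G\<^esub> psi_word G psi (drop T w) = psi_word G psi (take T w @ drop T w)"
    using Cons.prems(1) by (intro psi_word_append[OF assms(1,2), symmetric]) (auto dest: in_set_takeD in_set_dropD)
  finally show ?case by simp
qed

lemma count_lemma:
  assumes "monoid G" "psi ` Alph \<subseteq> carrier G" "finite Alph"
    and p: "p = v @ z" "set p \<subseteq> Alph" "psi_word G psi p = \<one>\<^bsub>G\<^esub>"
    and T: "T = t*s" and lv: "length v = s" and L: "L = word_problem G K Alph psi" and that: "k * T \<le> n"
  shows "t ^ k * card {w \<in> L. \<not> sublist v w \<and> length w = n}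
     \<le> card {w \<in> L. length w = n + k * length p}"
proof -
  let ?C = "{cs. set cs \<subseteq> {..<t} \<and> length cs = k}"
  let ?W = "{w \<in> L. \<not> sublist v w \<and> length w = n}"
  let ?D = "?C \<times> ?W"
  let ?f = "\<lambda>(cs, w). ins s T p cs w"
  let ?B = "{w \<in> L. length w = n + k * length p}"
  have fB: "finite ?B"
    by (rule finite_subset[OF _ finite_lists_length_eq[OF assms(3), of "n + k * length p"]])
       (auto simp: L word_problem_def)
  have le: "\<And>c. c < t \<Longrightarrow> c*s \<le> T" using T by simp
  have inj: "inj_on ?f ?D"
  proof (rule inj_onI)
    fix x y assume x: "x \<in> ?D" and y: "y \<in> ?D" and e: "?f x = ?f y"
    obtain cs w where xx: "x = (cs, w)" by (cases x)
    obtain cs' w' where yy: "y = (cs', w')" by (cases y)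
    have "cs = cs' \<and> w = w'"
      using x y e that unfolding xx yy p by (intro ins_inj[OF T lv]) auto
    then show "x = y" using xx yy by simp
  qed
  have img: "?f ` ?D \<subseteq> ?B"
  proof
    fix y assume "y \<in> ?f ` ?D"
    then obtain cs w where cw: "(cs, w) \<in> ?D" and y: "y = ins s T p cs w" by auto
    have sw: "set w \<subseteq> Alph" and pw: "psi_word G psi w \<in> K" using cw by (auto simp: L word_problem_def)
    have cs: "\<forall>c\<in>set cs. c*s \<le> T" using cw le by auto
    have "set y \<subseteq> Alph" using y ins_set[of s T p cs w] sw p by auto
    moreover have "psi_word G psi y \<in> K" using y ins_psi[OF assms(1,2) p(2,3) sw cs] pw by simp
    moreover have "length y = n + k * length p" using y ins_length[OF cs] cw that by auto
    ultimately show "y \<in> ?B" by (auto simp: L word_problem_def)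
  qed
  have "card ?D = t ^ k * card ?W"
    using card_lists_length_eq[of "{..<t}" k] by (simp add: card_cartesian_product)
  moreover have "card ?D \<le> card ?B" by (rule card_inj_on_le[OF inj img fB])
  ultimately show ?thesis by simp
qed


definition cnt :: "(nat \<Rightarrow> nat) \<Rightarrow> nat \<Rightarrow> ereal" where
  "cnt a n = (if a n = 0 then - \<infinity> else ereal (ln (real (a n)) / real n))"

lemma limsup_freq:
  fixes ff :: "nat \<Rightarrow> ereal"
  assumes "y < limsup ff" shows "\<exists>n\<ge>N. y < ff n"
proof (rule ccontr)
  assume "\<not> ?thesis"
  then have "eventually (\<lambda>n. ff n \<le> (\<lambda>_. y) n) sequentially"
    by (auto simp: eventually_sequentially not_less)
  then have "limsup ff \<le> limsup (\<lambda>_. y)" by (rule Limsup_mono)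
  also have "\<dots> = y" by (simp add: Limsup_const)
  finally show False using assms by simp
qed

lemma freq_limsup:
  fixes ff :: "nat \<Rightarrow> ereal"
  assumes "\<And>N. \<exists>n\<ge>N. c \<le> ff n" shows "c \<le> limsup ff"
  unfolding limsup_INF_SUP
proof (rule INF_greatest)
  fix N :: nat
  obtain n where "n \<ge> N" "c \<le> ff n" using assms by blast
  then show "c \<le> (SUP m\<in>{N..}. ff m)" by (meson SUP_upper2 atLeast_iff)
qed

lemma arith_key:
  fixes k n T m r D :: real
  assumes "T \<ge> 1" "m \<ge> 1" "D > 0" "k*T > n - T" "n \<ge> 2*T" "k \<ge> 0"
  shows "(r + D/(8*m)) * (n + k*m) < k*(D*T + m*r) + n*(r - D/8)"
proof -
  have dm: "D/(8*m) * m = D/8" using assms by simp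
  have e1: "(r + D/(8*m)) * (n + k*m) = r*n + r*k*m + n*(D/(8*m)) + k*(D/8)"
    using assms by (simp add: field_simps)
  have e2: "k*(D*T + m*r) + n*(r - D/8) = k*D*T + k*m*r + n*r - n*D/8" by (simp add: algebra_simps)
  have a1: "D/(8*m) \<le> D/8" using assms by (intro divide_left_mono) auto
  have a2: "n*(D/(8*m)) \<le> n*(D/8)" using a1 assms by (intro mult_left_mono) auto
  have kD: "0 \<le> k*D" using assms by simp
  have a3: "k*(D/8) \<le> k*D*T/8" using mult_left_mono[OF assms(1) kD] by simp
  have a4: "k*T*D > (n - T)*D" using assms by simp
  have a5: "n*D \<ge> 2*T*D" using assms by simp
  define P where "P = k*D*T"
  define Q where "Q = n*D"
  define R where "R = T*D"
  have a2': "n*(D/(8*m)) \<le> Q/8" using a2 by (simp add: Q_def)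
  have a3': "k*(D/8) \<le> P/8" using a3 by (simp add: P_def)
  have a4': "P > Q - R" using a4 by (simp add: P_def Q_def R_def algebra_simps)
  have a5': "Q \<ge> 2*R" using a5 by (simp add: Q_def R_def algebra_simps)
  have a6: "R > 0" using assms by (simp add: R_def)
  have g: "n*(D/(8*m)) + k*(D/8) < P - Q/8" using a2' a3' a4' a5' a6 by linarith
  have h: "k*D*T + k*m*r + n*r - n*D/8 - (r*n + r*k*m + n*(D/(8*m)) + k*(D/8))
      = P - Q/8 - (n*(D/(8*m)) + k*(D/8))" by (simp add: P_def Q_def algebra_simps)
  show ?thesis unfolding e1 e2 using g h by linarith
qed

lemma growth_gap:
  fixes a b :: "nat \<Rightarrow> nat" and s m C t T :: nat
  assumes s: "s > 0" and m: "m > 0" and C: "C > 0" and t: "t = C^m + 1" and T: "T = t*s"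
    and H1: "\<And>n. t^(n div T) * b n \<le> a (n + (n div T)*m)"
    and H2: "\<And>n. b n \<le> C^n"
    and H3: "\<And>N. \<exists>n\<ge>N. a n \<ge> 1"
  shows "limsup (cnt b) < limsup (cnt a)"
proof -
  have Tpos: "T \<ge> 1" using T t s by simp
  have a0: "0 \<le> limsup (cnt a)"
  proof (rule freq_limsup)
    fix N obtain n where "n \<ge> N" "a n \<ge> 1" using H3 by blast
    then show "\<exists>n\<ge>N. 0 \<le> cnt a n" by (intro exI[of _ n]) (auto simp: cnt_def)
  qed
  have bup: "limsup (cnt b) \<le> ereal (ln C)"
  proof -
    have "\<And>n. cnt b n \<le> ereal (ln C)"
    proof -
      fix n
      show "cnt b n \<le> ereal (ln C)"
      proof (cases "b n = 0")
        case True then show ?thesis by (simp add: cnt_def)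
      next
        case False
        have lc: "0 \<le> ln (real C)" using C by simp
        have "ln (real (b n)) \<le> ln (real C ^ n)"
          using False H2[of n] C by (subst ln_le_cancel_iff) (auto simp flip: of_nat_power)
        also have "\<dots> = real n * ln C" using C by (simp add: ln_realpow)
        finally have "ln (real (b n)) / real n \<le> ln C"
          using lc by (cases "n = 0") (auto simp: divide_le_eq mult.commute)
        then show ?thesis using False by (simp add: cnt_def)
      qed
    qed
    then have "limsup (cnt b) \<le> limsup (\<lambda>_. ereal (ln C))" by (intro Limsup_mono) auto
    then show ?thesis by (simp add: Limsup_const)
  qed
  show ?thesis
  proof (cases "limsup (cnt b) = - \<infinity>")
    case True then show ?thesis using a0 by simp
  next
    case False
    then obtain r where r: "limsup (cnt b) = ereal r" using bup by (cases "limsup (cnt b)") auto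
    have r0: "0 \<le> r"
    proof -
      have "0 \<le> limsup (cnt b)"
      proof (rule freq_limsup)
        fix N
        obtain n where "n \<ge> N" "ereal (r - 1) < cnt b n" using limsup_freq[of "ereal (r-1)" "cnt b" N] r by auto
        then show "\<exists>n\<ge>N. 0 \<le> cnt b n" by (auto simp: cnt_def split: if_splits)
      qed
      then show ?thesis using r by simp
    qed
    have rC: "r \<le> ln C" using bup r by simp
    define D where "D = (ln (real t) - real m * r) / real T"
    have lt: "ln (real t) > real m * ln C"
    proof -
      have "real m * ln (real C) = ln (real C ^ m)" using C by (simp add: ln_realpow)
      also have "\<dots> < ln (real t)" using C t by (subst ln_less_cancel_iff) (auto simp: add_pos_nonneg)
      finally show ?thesis .
    qed
    have "real m * r \<le> real m * ln C" using rC by (simp add: mult_left_mono)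
    then have Dpos: "D > 0" using lt Tpos by (simp add: D_def)
    have lnt: "ln (real t) = D * real T + real m * r" using Tpos by (simp add: D_def)
    define \<delta> where "\<delta> = D / (8 * real m)"
    have "ereal (r + \<delta>) \<le> limsup (cnt a)"
    proof (rule freq_limsup)
      fix N
      obtain n where n: "n \<ge> max N (2*T)" "ereal (r - D/8) < cnt b n"
        using limsup_freq[of "ereal (r - D/8)" "cnt b" "max N (2*T)"] r Dpos by auto
      have npos: "n > 0" using n Tpos by simp
      have bn: "b n \<noteq> 0" using n by (auto simp: cnt_def split: if_splits)
      have lb: "ln (real (b n)) > real n * (r - D/8)"
        using n bn npos by (simp add: cnt_def less_divide_eq mult.commute)
      define k where "k = n div T"
      define N' where "N' = n + k*m"
      have kT: "real k * real T > real n - real T"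
      proof -
        have "n = k*T + n mod T" using k_def by simp
        moreover have "n mod T < T" using Tpos by simp
        ultimately have "real n < real k * real T + real T" by (metis of_nat_add of_nat_mult add_strict_left_mono of_nat_less_iff)
        then show ?thesis by simp
      qed
      have aN: "t^k * b n \<le> a N'" using H1[of n] by (simp add: k_def N'_def)
      have tpos: "t > 0" using t by simp
      have apos: "a N' > 0" using aN bn tpos by (metis le_0_eq mult_is_0 neq0_conv power_not_zero)
      have r1: "real (t^k * b n) \<le> real (a N')" using aN by (simp only: of_nat_le_iff)
      have r2: "0 < real (t^k * b n)" using bn tpos by (simp only: of_nat_0_less_iff) simp
      have "ln (real (a N')) \<ge> ln (real (t^k * b n))"
      proof -
        have r3: "0 < real (a N')" using r1 r2 by linarith
        show ?thesis using ln_le_cancel_iff[OF r2 r3] r1 by simp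
      qed
      also have "ln (real (t^k * b n)) = real k * ln (real t) + ln (real (b n))"
        using bn tpos by (simp add: ln_mult ln_realpow)
      finally have la: "ln (real (a N')) > real k * ln (real t) + real n * (r - D/8)" using lb by simp
      have "(r + \<delta>) * (real n + real k * real m) < real k * (D * real T + real m * r) + real n * (r - D/8)"
        unfolding \<delta>_def using Tpos m Dpos kT n by (intro arith_key) auto
      then have "(r + \<delta>) * real N' < ln (real (a N'))" using la lnt by (simp add: N'_def)
      moreover have "N' > 0" using npos by (simp add: N'_def)
      ultimately have "r + \<delta> < ln (real (a N')) / real N'" by (simp add: less_divide_eq)
      moreover have "N' \<ge> N" using n by (simp add: N'_def)
      ultimately show "\<exists>n\<ge>N. ereal (r + \<delta>) \<le> cnt a n" using apos
        by (intro exI[of _ N']) (auto simp: cnt_def)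
    qed
    moreover have "\<delta> > 0" using Dpos m by (simp add: \<delta>_def)
    moreover have "ereal r < ereal (r + \<delta>)" using \<open>\<delta> > 0\<close> by simp
    ultimately have "ereal r < limsup (cnt a)" using less_le_trans by blast
    then show ?thesis using r by simp
  qed
qed


lemma cnt_mono:
  assumes "\<And>n. x n \<le> y n" shows "cnt x n \<le> cnt y n"
proof (cases "x n = 0")
  case True then show ?thesis by (simp add: cnt_def)
next
  case False
  then have y: "y n \<noteq> 0" using assms[of n] by auto
  have "ln (real (x n)) \<le> ln (real (y n))" using False assms[of n] by simp
  then have "ln (real (x n)) / real n \<le> ln (real (y n)) / real n"
    by (simp add: divide_right_mono)
  then show ?thesis using False y by (simp add: cnt_def)
qed

lemma psi_word_pow:
  assumes "monoid G" "psi ` Alph \<subseteq> carrier G" "set p \<subseteq> Alph" "psi_word G psi p = \<one>\<^bsub>G\<^esub>"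
  shows "psi_word G psi (concat (replicate N p)) = \<one>\<^bsub>G\<^esub>"
proof (induction N)
  case 0 then show ?case by (simp add: psi_word_def)
next
  case (Suc N)
  have "psi_word G psi (concat (replicate (Suc N) p)) = psi_word G psi (p @ concat (replicate N p))" by simp
  also have "\<dots> = psi_word G psi p \<otimes>\<^bsub>G\<^esub> psi_word G psi (concat (replicate N p))"
    using assms by (intro psi_word_append[OF assms(1,2)]) auto
  finally show ?case using Suc assms by (simp add: monoid.l_one monoid.one_closed)
qed

theorem mainTheorem17:
  fixes G :: "('g, 'b) monoid_scheme" and K :: "'g set" and Alph :: "'a set" and psi :: "'a \<Rightarrow> 'g"
  assumes "group G"
    and "finitely_generated_group G"
    and "subgroup K G"
    and "finite Alph"
    and "psi ` Alph \<subseteq> carrier G"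
    and "generates_as_semigroup G Alph psi"
  shows "\<forall>F. finite F \<and> F \<noteq> {} \<and>
            (\<forall>v\<in>F. v \<in> lists Alph \<and> v \<noteq> [] \<and> (\<exists>w\<in>word_problem G K Alph psi. sublist v w))
         \<longrightarrow> growth (avoid (word_problem G K Alph psi) F) < growth (word_problem G K Alph psi)"
proof (intro allI impI, elim conjE)
  fix F :: "'a list set"
  assume Fne: "F \<noteq> {}" and Fv: "\<forall>v\<in>F. v \<in> lists Alph \<and> v \<noteq> [] \<and> (\<exists>w\<in>word_problem G K Alph psi. sublist v w)"
  define L where "L = word_problem G K Alph psi"
  have mon: "monoid G" using assms(1) by (simp add: group.is_monoid)
  obtain v where vF: "v \<in> F" using Fne by blast
  have vA: "set v \<subseteq> Alph" and vne: "v \<noteq> []" using Fv vF by auto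
  have pv: "psi_word G psi v \<in> carrier G" using psi_word_closed[OF mon assms(5) vA] .
  have ipv: "inv\<^bsub>G\<^esub> psi_word G psi v \<in> carrier G" using pv assms(1) by (simp add: group.inv_closed)
  obtain z where zA: "z \<in> lists Alph" and zne: "z \<noteq> []" and pz: "psi_word G psi z = inv\<^bsub>G\<^esub> psi_word G psi v"
    using assms(6) ipv unfolding generates_as_semigroup_def by blast
  define p where "p = v @ z"
  have pA: "set p \<subseteq> Alph" using vA zA by (auto simp: p_def)
  have pp: "psi_word G psi p = \<one>\<^bsub>G\<^esub>"
    using psi_word_append[OF mon assms(5) vA, of z] zA pz pv assms(1)
    by (auto simp: p_def group.r_inv)
  have Ane: "Alph \<noteq> {}" using zA zne by (cases z) auto
  define C where "C = card Alph"
  have Cpos: "C > 0" using Ane assms(4) by (simp add: C_def card_gt_0_iff)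
  define s where "s = length v"
  define m where "m = length p"
  define t where "t = C^m + 1"
  define T where "T = t*s"
  have spos: "s > 0" using vne by (simp add: s_def)
  have mpos: "m > 0" using vne by (simp add: m_def p_def)
  define a where "a = (\<lambda>n. card {w \<in> L. length w = n})"
  define b where "b = (\<lambda>n. card {w \<in> L. \<not> sublist v w \<and> length w = n})"
  define bF where "bF = (\<lambda>n. card {w \<in> avoid L F. length w = n})"
  have finL: "\<And>n P. finite {w \<in> L. P w \<and> length w = n}"
    by (rule finite_subset[OF _ finite_lists_length_eq[OF assms(4)]]) (auto simp: L_def word_problem_def)
  have H1: "\<And>n. t^(n div T) * b n \<le> a (n + (n div T)*m)"
  proof -
    fix n
    have "n div T * T \<le> n" by (simp add: div_times_less_eq_dividend)
    then show "t^(n div T) * b n \<le> a (n + (n div T)*m)"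
      using count_lemma[OF mon assms(5,4) p_def pA pp T_def s_def[symmetric] L_def, of "n div T" n]
      by (simp add: a_def b_def m_def)
  qed
  have H2: "\<And>n. b n \<le> C^n"
  proof -
    fix n
    have "b n \<le> card {xs. set xs \<subseteq> Alph \<and> length xs = n}"
      unfolding b_def
      by (rule card_mono[OF finite_lists_length_eq[OF assms(4)]]) (auto simp: L_def word_problem_def)
    then show "b n \<le> C^n" by (simp add: card_lists_length_eq[OF assms(4)] C_def)
  qed
  have H3: "\<And>N. \<exists>n\<ge>N. a n \<ge> 1"
  proof -
    fix N
    let ?w = "concat (replicate N p)"
    have "?w \<in> L"
      using psi_word_pow[OF mon assms(5) pA pp, of N] pA subgroup.one_closed[OF assms(3)]
      by (auto simp: L_def word_problem_def)
    moreover have "length ?w = N * m" by (simp add: m_def length_concat sum_list_replicate)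
    ultimately have "{w \<in> L. True \<and> length w = N*m} \<noteq> {}" by blast
    then have "a (N*m) \<ge> 1" using finL[of "\<lambda>_. True" "N*m"] by (simp add: a_def card_gt_0_iff Suc_le_eq)
    moreover have "N*m \<ge> N" using mpos by simp
    ultimately show "\<exists>n\<ge>N. a n \<ge> 1" by blast
  qed
  have gap: "limsup (cnt b) < limsup (cnt a)"
    using growth_gap[OF spos mpos Cpos t_def T_def H1 H2 H3] .
  have gL: "growth L = limsup (cnt a)" by (simp add: growth_def cnt_def[abs_def] a_def Let_def)
  have gF: "growth (avoid L F) = limsup (cnt bF)" by (simp add: growth_def cnt_def[abs_def] bF_def Let_def)
  have "\<And>n. bF n \<le> b n"
  proof -
    fix n
    show "bF n \<le> b n" unfolding bF_def b_def
      using vF finL[of "\<lambda>w. \<not> sublist v w" n] by (intro card_mono) (auto simp: avoid_def)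
  qed
  then have "limsup (cnt bF) \<le> limsup (cnt b)" by (intro Limsup_mono always_eventually allI cnt_mono) auto
  then show "growth (avoid (word_problem G K Alph psi) F) < growth (word_problem G K Alph psi)"
    using gap gL gF by (simp add: L_def)
qed

end
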